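(* Let $\eta>0$, $\alpha\in(1/2,1)$, $\eta_i=\eta i^{-\alpha}$, let $\{e_i\}$ be i.i.d. real random variables with $\mathbb{E}e_i=0$ and $0<\mathbb{E}e_i^2<\infty$, let $x_0$ be deterministic, and let $X_0=x_0$, $X_i=(1-\eta_i)X_{i-1}+\eta_ie_i$ for $i\ge1$. Let $\ell_i=\lfloor Ci^{\alpha}\log i\rfloor$ for a constant $C>0$, $t_i=i-\ell_i+1$, and $W_i=\sum_{j=t_i}^{i-1}X_j$. Then for all $1\le j<i$: (1) $\mathrm{Var}(W_i)\lesssim\ell_i$; (2) $\mathrm{Cov}(X_i,W_j)\lesssim\exp\{\frac{\eta}{1-\alpha}(j^{1-\alpha}-i^{1-\alpha})\}\le\exp\{-\eta i^{-\alpha}(i-j)\}$; (3) $\mathrm{Cov}(X_j,W_i)\lesssim\mathcal{O}(1)$; (4) $\mathrm{Cov}(W_i,W_j)\lesssim\ell_j$.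
   Context: $a\lesssim b$ means $a\le Cb$ with a constant independent of $i,j$. *)

theory Defs
  imports "HOL-Probability.Probability"
begin

definition step :: "real \<Rightarrow> real \<Rightarrow> nat \<Rightarrow> real" where
  "step \<eta> \<alpha> i = \<eta> * real i powr (-\<alpha>)"

primrec Xseq :: "real \<Rightarrow> real \<Rightarrow> real \<Rightarrow> (nat \<Rightarrow> 'a \<Rightarrow> real) \<Rightarrow> nat \<Rightarrow> 'a \<Rightarrow> real" where
  "Xseq \<eta> \<alpha> x0 e 0 \<omega> = x0"
| "Xseq \<eta> \<alpha> x0 e (Suc i) \<omega> =
     (1 - step \<eta> \<alpha> (Suc i)) * Xseq \<eta> \<alpha> x0 e i \<omega> + step \<eta> \<alpha> (Suc i) * e (Suc i) \<omega>"

definition blen :: "real \<Rightarrow> real \<Rightarrow> nat \<Rightarrow> int" where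
  "blen C \<alpha> i = \<lfloor>C * real i powr \<alpha> * ln (real i)\<rfloor>"

definition bstart :: "real \<Rightarrow> real \<Rightarrow> nat \<Rightarrow> int" where
  "bstart C \<alpha> i = int i - blen C \<alpha> i + 1"

text \<open>W_i = sum of X_j over integers j with t_i <= j <= i-1 (and j >= 0, as X_j
  is only defined for j >= 0).\<close>
definition Wblock :: "real \<Rightarrow> real \<Rightarrow> real \<Rightarrow> real \<Rightarrow> (nat \<Rightarrow> 'a \<Rightarrow> real) \<Rightarrow> nat \<Rightarrow> 'a \<Rightarrow> real" where
  "Wblock \<eta> \<alpha> C x0 e i \<omega> =
     (\<Sum>j \<in> {j. int j \<ge> bstart C \<alpha> i \<and> j < i}. Xseq \<eta> \<alpha> x0 e j \<omega>)"

definition (in prob_space) cov :: "('a \<Rightarrow> real) \<Rightarrow> ('a \<Rightarrow> real) \<Rightarrow> real" where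
  "cov X Y = expectation (\<lambda>\<omega>. (X \<omega> - expectation X) * (Y \<omega> - expectation Y))"

end

theory Submission
  imports Defs
begin

context prob_space
begin

lemma lin_cov:
  fixes e :: "nat \<Rightarrow> 'a \<Rightarrow> real" and F :: "nat set"
  assumes fin: "finite F"
    and ie: "\<And>m. m \<in> F \<Longrightarrow> integrable M (e m)"
    and Ee: "\<And>m. m \<in> F \<Longrightarrow> expectation (e m) = 0"
    and ip: "\<And>m n. m \<in> F \<Longrightarrow> n \<in> F \<Longrightarrow> integrable M (\<lambda>\<omega>. e m \<omega> * e n \<omega>)"
    and Ep: "\<And>m n. m \<in> F \<Longrightarrow> n \<in> F \<Longrightarrow> expectation (\<lambda>\<omega>. e m \<omega> * e n \<omega>) = (if m = n then s else 0)"
    and Y: "Y = (\<lambda>\<omega>. c + (\<Sum>m\<in>F. u m * e m \<omega>))"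
    and Z: "Z = (\<lambda>\<omega>. d + (\<Sum>m\<in>F. v m * e m \<omega>))"
  shows "cov Y Z = s * (\<Sum>m\<in>F. u m * v m)"
proof -
  have EY: "expectation Y = c" unfolding Y
    using ie Ee fin by (simp add: Bochner_Integration.integral_add Bochner_Integration.integral_sum prob_space)
  have EZ: "expectation Z = d" unfolding Z
    using ie Ee fin by (simp add: Bochner_Integration.integral_add Bochner_Integration.integral_sum prob_space)
  have eq: "(\<lambda>\<omega>. (Y \<omega> - expectation Y) * (Z \<omega> - expectation Z))
      = (\<lambda>\<omega>. \<Sum>m\<in>F. \<Sum>n\<in>F. (u m * v n) * (e m \<omega> * e n \<omega>))"
    unfolding EY EZ by (simp add: Y Z sum_product algebra_simps)
  have "cov Y Z = (\<Sum>m\<in>F. \<Sum>n\<in>F. (u m * v n) * expectation (\<lambda>\<omega>. e m \<omega> * e n \<omega>))"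
    unfolding cov_def eq using ip
    by (simp add: Bochner_Integration.integral_sum integrable_sum)
  also have "\<dots> = (\<Sum>m\<in>F. \<Sum>n\<in>F. if m = n then u m * v n * s else 0)"
    by (intro sum.cong refl) (simp add: Ep)
  also have "\<dots> = s * (\<Sum>m\<in>F. u m * v m)"
    using fin by (simp add: sum_distrib_left mult.commute mult.left_commute)
  finally show ?thesis .
qed

lemma e_props:
  fixes e :: "nat \<Rightarrow> 'a \<Rightarrow> real"
  assumes rv: "\<And>i. e i \<in> borel_measurable M"
    and ind: "indep_vars (\<lambda>_. borel) e {1..}"
    and dis: "\<And>i. i \<ge> 1 \<Longrightarrow> distr M borel (e i) = distr M borel (e 1)"
    and sq: "integrable M (\<lambda>\<omega>. (e 1 \<omega>)\<^sup>2)"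
    and m0: "expectation (e 1) = 0"
    and m: "1 \<le> m" and n: "1 \<le> n"
  shows "integrable M (e m)" "expectation (e m) = 0"
    "integrable M (\<lambda>\<omega>. e m \<omega> * e n \<omega>)"
    "expectation (\<lambda>\<omega>. e m \<omega> * e n \<omega>) = (if m = n then expectation (\<lambda>\<omega>. (e 1 \<omega>)\<^sup>2) else 0)"
proof -
  have sqk: "integrable M (\<lambda>\<omega>. (e k \<omega>)\<^sup>2)" if "1 \<le> k" for k
  proof -
    have "integrable (distr M borel (e 1)) (\<lambda>x. x\<^sup>2)"
      using sq rv by (subst integrable_distr_eq) auto
    then have "integrable (distr M borel (e k)) (\<lambda>x::real. x\<^sup>2)" using dis[OF that] by simp
    then show ?thesis using rv by (subst (asm) integrable_distr_eq) auto
  qed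
  have ik: "integrable M (e k)" if "1 \<le> k" for k
    using square_integrable_imp_integrable[OF rv sqk[OF that]] .
  have Ek: "expectation (e k) = 0" if "1 \<le> k" for k
  proof -
    have "expectation (e k) = integral\<^sup>L (distr M borel (e k)) (\<lambda>x. x)"
      using rv by (subst integral_distr) auto
    also have "\<dots> = integral\<^sup>L (distr M borel (e 1)) (\<lambda>x. x)" using dis[OF that] by simp
    also have "\<dots> = expectation (e 1)" using rv by (subst integral_distr) auto
    finally show ?thesis using m0 by simp
  qed
  have Ek2: "expectation (\<lambda>\<omega>. (e k \<omega>)\<^sup>2) = expectation (\<lambda>\<omega>. (e 1 \<omega>)\<^sup>2)" if "1 \<le> k" for k
  proof -
    have "expectation (\<lambda>\<omega>. (e k \<omega>)\<^sup>2) = integral\<^sup>L (distr M borel (e k)) (\<lambda>x. x\<^sup>2)"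
      using rv by (subst integral_distr) auto
    also have "\<dots> = integral\<^sup>L (distr M borel (e 1)) (\<lambda>x. x\<^sup>2)" using dis[OF that] by simp
    also have "\<dots> = expectation (\<lambda>\<omega>. (e 1 \<omega>)\<^sup>2)" using rv by (subst integral_distr) auto
    finally show ?thesis .
  qed
  show "integrable M (e m)" using ik m .
  show "expectation (e m) = 0" using Ek m .
  have "integrable M (\<lambda>\<omega>. e m \<omega> * e n \<omega>) \<and> expectation (\<lambda>\<omega>. e m \<omega> * e n \<omega>) = (if m = n then expectation (\<lambda>\<omega>. (e 1 \<omega>)\<^sup>2) else 0)"
  proof (cases "m = n")
    case True
    then show ?thesis using sqk[OF m] Ek2[OF m] by (simp add: power2_eq_square)
  next
    case False
    have "indep_vars (\<lambda>_. borel) e (insert m {n})"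
      by (rule indep_vars_subset[OF ind]) (use m n in auto)
    from indep_vars_sum[OF _ _ this] False
    have iv: "indep_var borel (e m) borel (e n)" by simp
    show ?thesis using indep_var_lebesgue_integral[OF iv ik[OF m] ik[OF n]]
        indep_var_integrable[OF iv ik[OF m] ik[OF n]] Ek[OF m] Ek[OF n] False by simp
  qed
  then show "integrable M (\<lambda>\<omega>. e m \<omega> * e n \<omega>)"
    "expectation (\<lambda>\<omega>. e m \<omega> * e n \<omega>) = (if m = n then expectation (\<lambda>\<omega>. (e 1 \<omega>)\<^sup>2) else 0)" by auto
qed

end

locale detp =
  fixes \<eta> \<alpha> :: real
  assumes eta_pos: "\<eta> > 0" and a_gt: "1/2 < \<alpha>" and a_lt: "\<alpha> < 1"
begin

abbreviation s where "s \<equiv> step \<eta> \<alpha>"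

definition S :: "nat \<Rightarrow> real" where "S n = (\<Sum>r\<in>{1..n}. s r)"

definition Pr :: "nat \<Rightarrow> nat \<Rightarrow> real" where "Pr k l = (\<Prod>r\<in>{Suc k..l}. 1 - s r)"

lemma s0[simp]: "s 0 = 0" by (simp add: step_def)

lemma s_nonneg: "s r \<ge> 0" using eta_pos by (simp add: step_def)

lemma s_pos: "r \<ge> 1 \<Longrightarrow> s r > 0" using eta_pos by (simp add: step_def)

lemma s_le: "s r \<le> \<eta>"
proof (cases "r = 0")
  case False
  then have "real r powr \<alpha> \<ge> 1" using a_gt
    by (intro ge_one_powr_ge_zero) auto
  then have "real r powr (-\<alpha>) \<le> 1"
    by (simp add: powr_minus inverse_le_1_iff)
  then show ?thesis using eta_pos unfolding step_def
    by (metis mult.right_neutral mult_left_mono less_imp_le)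
qed (use eta_pos in simp)

lemma S_Suc: "S (Suc n) = S n + s (Suc n)"
  unfolding S_def by simp

lemma S_add: "S (l + d) = S l + (\<Sum>r\<in>{Suc l..l+d}. s r)"
proof (induction d)
  case 0 then show ?case by simp
next
  case (Suc d) then show ?case
    by (simp add: S_Suc)
qed

lemma S_mono: "l \<le> k \<Longrightarrow> S l \<le> S k"
  using S_add[of l "k - l"] s_nonneg by (simp add: sum_nonneg)

lemma S_diff_ge: "l \<le> k \<Longrightarrow> S k - S l \<ge> real (k - l) * s k"
proof -
  assume "l \<le> k"
  have "s r \<ge> s k" if "Suc l \<le> r" "r \<le> k" for r
  proof -
    have "real r powr (-\<alpha>) \<ge> real k powr (-\<alpha>)"
      using that a_gt by (intro powr_mono2') auto
    then show ?thesis using eta_pos by (simp add: step_def)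
  qed
  then have "(\<Sum>r\<in>{Suc l..k}. s r) \<ge> (\<Sum>r\<in>{Suc l..k}. s k)" by (intro sum_mono) auto
  then show ?thesis using S_add[of l "k - l"] \<open>l \<le> k\<close> by simp
qed

lemma exists_N2: "\<exists>N2. \<forall>r\<ge>N2. s r \<le> 1"
proof -
  define N2 where "N2 = nat \<lceil>\<eta> powr (1/\<alpha>)\<rceil> + 1"
  have "s r \<le> 1" if "r \<ge> N2" for r
  proof -
    have r1: "real r \<ge> \<eta> powr (1/\<alpha>)" "real r > 0" using that unfolding N2_def
      by linarith+
    then have "real r powr \<alpha> \<ge> (\<eta> powr (1/\<alpha>)) powr \<alpha>"
      using a_gt by (intro powr_mono2) auto
    also have "(\<eta> powr (1/\<alpha>)) powr \<alpha> = \<eta>" using a_gt eta_pos by (simp add: powr_powr)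
    finally have "\<eta> \<le> real r powr \<alpha>" .
    then show ?thesis using r1 by (simp add: step_def powr_minus divide_simps)
  qed
  then show ?thesis by blast
qed

lemma Pr_bound_aux:
  assumes N2: "\<forall>r\<ge>N2. s r \<le> 1"
  shows "\<bar>Pr k (k + d)\<bar> \<le> exp (-(S (k + d) - S k)) * exp (2 * \<eta> * real (min (k + d) N2))"
proof (induction d)
  case 0 then show ?case using eta_pos by (simp add: Pr_def)
next
  case (Suc d)
  let ?r = "Suc (k + d)"
  have Pr_eq: "Pr k (Suc (k + d)) = Pr k (k + d) * (1 - s ?r)"
    unfolding Pr_def by simp
  have E: "exp (-(S (k + Suc d) - S k)) = exp (-(S (k + d) - S k)) * exp (- s ?r)"
    by (simp add: S_Suc exp_add[symmetric])
  have f: "\<bar>1 - s ?r\<bar> * exp (2 * \<eta> * real (min (k + d) N2)) \<le> exp (- s ?r) * exp (2 * \<eta> * real (min (k + Suc d) N2))"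
  proof (cases "?r \<ge> N2")
    case True
    then have "s ?r \<le> 1" using N2 by auto
    then have "\<bar>1 - s ?r\<bar> \<le> exp (- s ?r)" using exp_ge_add_one_self[of "- s ?r"] by simp
    moreover have "min (k + d) N2 \<le> min (k + Suc d) N2" by simp
    ultimately show ?thesis using eta_pos
      by (intro mult_mono) auto
  next
    case False
    then have mm: "real (min (k + Suc d) N2) = real (min (k + d) N2) + 1" by simp
    have "\<bar>1 - s ?r\<bar> \<le> 1 + s ?r" using s_nonneg[of ?r] by simp
    also have "\<dots> \<le> exp (s ?r)" by simp
    also have "\<dots> = exp (- s ?r) * exp (2 * s ?r)" by (simp add: exp_add[symmetric])
    also have "\<dots> \<le> exp (- s ?r) * exp (2 * \<eta>)" using s_le[of ?r] by simp
    finally have "\<bar>1 - s ?r\<bar> \<le> exp (- s ?r) * exp (2 * \<eta>)" .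
    then have "\<bar>1 - s ?r\<bar> * exp (2 * \<eta> * real (min (k + d) N2)) \<le> exp (- s ?r) * exp (2 * \<eta>) * exp (2 * \<eta> * real (min (k + d) N2))"
      by (intro mult_right_mono) auto
    also have "\<dots> = exp (- s ?r) * exp (2 * \<eta> * real (min (k + Suc d) N2))"
      unfolding mm by (simp add: exp_add[symmetric] algebra_simps)
    finally show ?thesis .
  qed
  have "\<bar>Pr k (k + Suc d)\<bar> = \<bar>Pr k (k + d)\<bar> * \<bar>1 - s ?r\<bar>" by (simp add: Pr_eq abs_mult)
  also have "\<dots> \<le> exp (-(S (k + d) - S k)) * exp (2 * \<eta> * real (min (k + d) N2)) * \<bar>1 - s ?r\<bar>"
    by (intro mult_right_mono Suc) auto
  also have "\<dots> = exp (-(S (k + d) - S k)) * (\<bar>1 - s ?r\<bar> * exp (2 * \<eta> * real (min (k + d) N2)))"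
    by simp
  also have "\<dots> \<le> exp (-(S (k + d) - S k)) * (exp (- s ?r) * exp (2 * \<eta> * real (min (k + Suc d) N2)))"
    by (intro mult_left_mono f) auto
  also have "\<dots> = exp (-(S (k + Suc d) - S k)) * exp (2 * \<eta> * real (min (k + Suc d) N2))"
    unfolding E by simp
  finally show ?case .
qed

lemma exists_B: "\<exists>B\<ge>1. \<forall>k l. k \<le> l \<longrightarrow> \<bar>Pr k l\<bar> \<le> B * exp (-(S l - S k))"
proof -
  obtain N2 where N2: "\<forall>r\<ge>N2. s r \<le> 1" using exists_N2 by blast
  define B where "B = exp (2 * \<eta> * real N2)"
  have "B \<ge> 1" unfolding B_def using eta_pos by simp
  moreover have "\<bar>Pr k l\<bar> \<le> B * exp (-(S l - S k))" if "k \<le> l" for k l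
  proof -
    have "\<bar>Pr k (k + (l - k))\<bar> \<le> exp (-(S (k + (l - k)) - S k)) * exp (2 * \<eta> * real (min (k + (l - k)) N2))"
      by (rule Pr_bound_aux[OF N2])
    also have "\<dots> \<le> exp (-(S (k + (l - k)) - S k)) * B"
      unfolding B_def using eta_pos by (intro mult_left_mono) auto
    finally show ?thesis using that by (simp add: mult.commute)
  qed
  ultimately show ?thesis by blast
qed

lemma back_sum: "(\<Sum>m\<in>{..k}. s m * exp (-(S k - S m))) \<le> 1 + \<eta>"
proof (induction k)
  case 0 then show ?case using eta_pos by simp
next
  case (Suc k)
  let ?x = "s (Suc k)"
  have "(\<Sum>m\<in>{..Suc k}. s m * exp (-(S (Suc k) - S m)))
      = exp (- ?x) * (\<Sum>m\<in>{..k}. s m * exp (-(S k - S m))) + ?x"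
    by (simp add: S_Suc sum_distrib_left exp_add[symmetric] algebra_simps)
  also have "\<dots> \<le> exp (- ?x) * (1 + \<eta>) + ?x"
    using Suc by (intro add_right_mono mult_left_mono) auto
  also have "\<dots> \<le> 1 + \<eta>"
  proof -
    have x0: "?x \<ge> 0" "?x \<le> \<eta>" using s_nonneg s_le by auto
    have "exp (- ?x) * (1 + ?x) \<le> 1"
      using exp_ge_add_one_self[of ?x] by (simp add: exp_minus field_simps)
    then have ex: "exp (- ?x) \<le> 1 / (1 + ?x)" using x0 by (subst pos_le_divide_eq) auto
    have "exp (- ?x) * (1 + \<eta>) \<le> (1 + \<eta>) / (1 + ?x)"
      using mult_right_mono[OF ex, of "1+\<eta>"] eta_pos by simp
    moreover have "(1 + \<eta>) / (1 + ?x) + ?x \<le> 1 + \<eta>"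
      using x0 by (simp add: field_simps) (simp add: algebra_simps mult_right_mono power2_eq_square)
    ultimately show ?thesis by linarith
  qed
  finally show ?case .
qed

lemma fwd_sum_aux: "(\<Sum>k\<in>{Suc l..l+d}. s k * exp (-(S k - S l)/2)) \<le> 2 - 2 * exp (-(S (l+d) - S l)/2)"
proof (induction d)
  case 0 then show ?case by simp
next
  case (Suc d)
  let ?x = "s (Suc (l + d))" and ?A = "S (l + d) - S l"
  have "(\<Sum>k\<in>{Suc l..l+Suc d}. s k * exp (-(S k - S l)/2))
      = (\<Sum>k\<in>{Suc l..l+d}. s k * exp (-(S k - S l)/2)) + ?x * exp (-(?A + ?x)/2)"
    by (simp add: S_Suc algebra_simps)
  also have "\<dots> \<le> 2 - 2 * exp (-?A/2) + ?x * exp (-(?A + ?x)/2)"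
    using Suc by simp
  also have "\<dots> \<le> 2 - 2 * exp (-(?A + ?x)/2)"
  proof -
    have "?x / 2 \<le> exp (?x/2) - 1" using exp_ge_add_one_self[of "?x/2"] by linarith
    then have "?x / 2 * exp (-(?A + ?x)/2) \<le> (exp (?x/2) - 1) * exp (-(?A + ?x)/2)"
      by (intro mult_right_mono) auto
    also have "\<dots> = exp (-?A/2) - exp (-(?A + ?x)/2)"
      by (simp add: algebra_simps exp_add[symmetric] diff_divide_distrib add_divide_distrib)
    finally show ?thesis by simp
  qed
  also have "\<dots> = 2 - 2 * exp (-(S (l + Suc d) - S l)/2)"
    by (simp add: S_Suc algebra_simps)
  finally show ?case .
qed

lemma fwd_sum: "(\<Sum>k\<in>{l<..n}. s k * exp (-(S k - S l)/2)) \<le> 2"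
proof (cases "l \<le> n")
  case True
  have eq: "{l<..n} = {Suc l..l + (n - l)}" using True by auto
  have "(\<Sum>k\<in>{Suc l..l+(n-l)}. s k * exp (-(S k - S l)/2)) \<le> 2 - 2 * exp (-(S (l+(n-l)) - S l)/2)"
    by (rule fwd_sum_aux)
  moreover have "exp (-(S (l+(n-l)) - S l)/2) > 0" by simp
  ultimately show ?thesis unfolding eq by linarith
qed simp

end

context detp begin

lemma exists_N1: "\<exists>N1\<ge>1. \<forall>n\<ge>N1. s n \<le> s (Suc n) * exp (s (Suc n) / 2)"
proof -
  define N1 where "N1 = nat \<lceil>(4/\<eta>) powr (1/(1-\<alpha>))\<rceil> + 1"
  have "s n \<le> s (Suc n) * exp (s (Suc n) / 2)" if "n \<ge> N1" for n
  proof -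
    define x where "x = real n"
    have xge: "x \<ge> (4/\<eta>) powr (1/(1-\<alpha>))" "x > 0" "x \<ge> 1" using that unfolding N1_def x_def
      by linarith+
    have a: "x powr (1-\<alpha>) \<ge> 4/\<eta>"
    proof -
      have "x powr (1-\<alpha>) \<ge> ((4/\<eta>) powr (1/(1-\<alpha>))) powr (1-\<alpha>)"
        using xge a_lt by (intro powr_mono2) auto
      also have "((4/\<eta>) powr (1/(1-\<alpha>))) powr (1-\<alpha>) = 4/\<eta>"
        using a_lt eta_pos by (simp add: powr_powr)
      finally show ?thesis .
    qed
    have b: "(x+1) powr \<alpha> \<le> 2 * x powr \<alpha>"
    proof -
      have "(x+1) powr \<alpha> \<le> (2*x) powr \<alpha>" using xge a_gt by (intro powr_mono2) auto
      also have "\<dots> = 2 powr \<alpha> * x powr \<alpha>" using xge by (simp add: powr_mult)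
      also have "2 powr \<alpha> \<le> 2 powr 1" using a_lt by (intro powr_mono) auto
      then have "2 powr \<alpha> * x powr \<alpha> \<le> 2 * x powr \<alpha>" by (intro mult_right_mono) auto
      finally show ?thesis .
    qed
    have c: "4 * x powr \<alpha> \<le> \<eta> * x"
    proof -
      have "x = x powr \<alpha> * x powr (1-\<alpha>)" using xge by (simp add: powr_add[symmetric])
      then have "\<eta> * x = \<eta> * x powr (1-\<alpha>) * x powr \<alpha>" by (simp add: algebra_simps)
      moreover have "\<eta> * x powr (1-\<alpha>) \<ge> 4" using a eta_pos by (simp add: field_simps)
      ultimately show ?thesis by (metis mult_right_mono powr_ge_zero mult.commute)
    qed
    have xp: "(x+1) powr \<alpha> > 0" using xge by simp
    have s1: "s (Suc n) = \<eta> / (x+1) powr \<alpha>" unfolding step_def x_def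
      by (simp add: powr_minus divide_inverse add.commute)
    have d: "1/x \<le> s (Suc n) / 2"
      unfolding s1 using b c xge xp eta_pos by (simp add: field_simps)
    have e: "(x+1) powr \<alpha> \<le> x powr \<alpha> * (1 + 1/x)"
    proof -
      have "(x+1) powr \<alpha> = (x * ((x+1)/x)) powr \<alpha>" using xge by simp
      also have "\<dots> = x powr \<alpha> * ((x+1)/x) powr \<alpha>" by (rule powr_mult)
      also have "((x+1)/x) powr \<alpha> \<le> ((x+1)/x) powr 1" using xge a_lt by (intro powr_mono) auto
      then have "x powr \<alpha> * ((x+1)/x) powr \<alpha> \<le> x powr \<alpha> * ((x+1)/x)" using xge by (intro mult_left_mono) auto
      finally show ?thesis using xge by (simp add: field_simps)
    qed
    have f: "1 + 1/x \<le> exp (s (Suc n) / 2)"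
      using d exp_ge_add_one_self[of "s (Suc n) / 2"] by linarith
    have g: "(x+1) powr \<alpha> \<le> x powr \<alpha> * exp (s (Suc n) / 2)"
      using e mult_left_mono[OF f, of "x powr \<alpha>"] by simp
    have sn: "s n = \<eta> / x powr \<alpha>" unfolding step_def x_def by (simp add: powr_minus divide_inverse)
    have "\<eta> / x powr \<alpha> \<le> \<eta> * exp (s (Suc n) / 2) / (x+1) powr \<alpha>"
      using g xge xp eta_pos by (simp add: field_simps)
    then show ?thesis unfolding sn s1 by simp
  qed
  moreover have "N1 \<ge> 1" unfolding N1_def by simp
  ultimately show ?thesis by blast
qed

lemma mvt_powr:
  fixes x y a :: real
  assumes "0 < x" "x \<le> y" "0 < a" "a < 1"
  shows "a * y powr (a-1) * (y-x) \<le> y powr a - x powr a"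
    and "y powr a - x powr a \<le> a * x powr (a-1) * (y-x)"
proof -
  have "a * y powr (a-1) * (y-x) \<le> y powr a - x powr a \<and> y powr a - x powr a \<le> a * x powr (a-1) * (y-x)"
  proof (cases "x = y")
    case True then show ?thesis by simp
  next
    case False
    then have xy: "x < y" using assms by simp
    have "\<exists>z. x < z \<and> z < y \<and> (y powr a - x powr a = (y - x) * (a * z powr (a - 1)))"
      by (rule MVT2[OF xy]) (use assms in \<open>auto intro!: has_real_derivative_powr\<close>)
    then obtain z where z: "x < z" "z < y" "y powr a - x powr a = (y - x) * (a * z powr (a - 1))" by blast
    have "y powr (a-1) \<le> z powr (a-1)" using z assms by (intro powr_mono2') auto
    moreover have "z powr (a-1) \<le> x powr (a-1)" using z assms by (intro powr_mono2') auto
    ultimately have "a * y powr (a-1) \<le> a * z powr (a-1)" "a * z powr (a-1) \<le> a * x powr (a-1)"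
      using assms by (auto intro!: mult_left_mono)
    then have "(y - x) * (a * y powr (a-1)) \<le> (y - x) * (a * z powr (a-1))"
      "(y - x) * (a * z powr (a-1)) \<le> (y - x) * (a * x powr (a-1))"
      using xy by (auto intro!: mult_left_mono)
    then show ?thesis unfolding z(3) by (simp add: algebra_simps)
  qed
  then show "a * y powr (a-1) * (y-x) \<le> y powr a - x powr a"
    and "y powr a - x powr a \<le> a * x powr (a-1) * (y-x)" by auto
qed

end

context detp begin

lemma exists_c: "\<exists>c\<ge>1. \<forall>l k. l \<le> k \<longrightarrow> s l * exp (-(S k - S l)/2) \<le> c * s k"
proof -
  obtain N1 where N1: "N1 \<ge> 1" "\<forall>n\<ge>N1. s n \<le> s (Suc n) * exp (s (Suc n) / 2)"
    using exists_N1 by blast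
  define \<phi> where "\<phi> n = s n * exp (S n / 2)" for n
  have phi_nn: "\<phi> n \<ge> 0" for n unfolding \<phi>_def using s_nonneg by simp
  have phi_step: "\<phi> n \<le> \<phi> (Suc n)" if "n \<ge> N1" for n
  proof -
    have "\<phi> n \<le> s (Suc n) * exp (s (Suc n) / 2) * exp (S n / 2)"
      unfolding \<phi>_def using N1 that by (intro mult_right_mono) auto
    also have "\<dots> = \<phi> (Suc n)" unfolding \<phi>_def
      by (simp add: S_Suc exp_add[symmetric] add_divide_distrib algebra_simps)
    finally show ?thesis .
  qed
  have phi_mono: "\<phi> l \<le> \<phi> k" if "N1 \<le> l" "l \<le> k" for l k
  proof -
    have "(\<lambda>n. \<phi> (n + N1)) (l - N1) \<le> (\<lambda>n. \<phi> (n + N1)) (k - N1)"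
      by (rule lift_Suc_mono_le[of "\<lambda>n. \<phi> (n + N1)"]) (use phi_step that in auto)
    then show ?thesis using that by simp
  qed
  define pm where "pm = \<eta> * real N1 powr (-\<alpha>)"
  have pm_pos: "pm > 0" unfolding pm_def using eta_pos N1 by simp
  have phi_low: "\<phi> k \<ge> pm" if "k \<ge> 1" for k
  proof -
    have low: "s k' \<ge> pm" if "1 \<le> k'" "k' \<le> N1" for k'
    proof -
      have "real k' powr (-\<alpha>) \<ge> real N1 powr (-\<alpha>)" using that a_gt by (intro powr_mono2') auto
      then show ?thesis unfolding pm_def step_def using eta_pos by simp
    qed
    have phi_ge_s: "\<phi> k' \<ge> s k'" for k'
    proof -
      have "S k' \<ge> 0" using S_mono[of 0 k'] by (simp add: S_def)
      then have "exp (S k' / 2) \<ge> 1" by simp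
      from mult_left_mono[OF this s_nonneg[of k']] show ?thesis unfolding \<phi>_def by simp
    qed
    show ?thesis
    proof (cases "k \<le> N1")
      case True then show ?thesis using low[OF that True] phi_ge_s[of k] by linarith
    next
      case False
      then have "\<phi> N1 \<le> \<phi> k" by (intro phi_mono) auto
      then show ?thesis using low[of N1] N1 phi_ge_s[of N1] by linarith
    qed
  qed
  define Mx where "Mx = (\<Sum>n<N1. \<phi> n)"
  have Mx_nn: "Mx \<ge> 0" unfolding Mx_def using phi_nn by (simp add: sum_nonneg)
  define c where "c = 1 + Mx / pm"
  have c1: "c \<ge> 1" unfolding c_def using Mx_nn pm_pos by simp
  have main: "\<phi> l \<le> c * \<phi> k" if "l \<le> k" for l k
  proof (cases "l = 0")
    case True then have "\<phi> l = 0" by (simp add: \<phi>_def)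
    then show ?thesis using c1 phi_nn[of k] by simp
  next
    case False
    then have k1: "k \<ge> 1" using that by simp
    show ?thesis
    proof (cases "N1 \<le> l")
      case True
      then have "\<phi> l \<le> \<phi> k" using that by (intro phi_mono)
      also have "\<phi> k \<le> c * \<phi> k" using c1 phi_nn[of k] by (simp add: mult_le_cancel_right1)
      finally show ?thesis .
    next
      case False
      then have "\<phi> l \<le> Mx" unfolding Mx_def
        by (intro member_le_sum) (use phi_nn in auto)
      also have "Mx = (Mx / pm) * pm" using pm_pos by simp
      also have "\<dots> \<le> (Mx / pm) * \<phi> k"
        using phi_low[OF k1] Mx_nn pm_pos by (intro mult_left_mono) auto
      also have "\<dots> \<le> c * \<phi> k" unfolding c_def using phi_nn[of k] by (simp add: algebra_simps)
      finally show ?thesis .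
    qed
  qed
  have "s l * exp (-(S k - S l)/2) \<le> c * s k" if "l \<le> k" for l k
  proof -
    have "s l * exp (-(S k - S l)/2) = \<phi> l * exp (- S k / 2)"
      unfolding \<phi>_def by (simp add: exp_add[symmetric] diff_divide_distrib)
    also have "\<dots> \<le> c * \<phi> k * exp (- S k / 2)" using main[OF that] by (intro mult_right_mono) auto
    also have "\<dots> = c * s k" unfolding \<phi>_def by (simp add: exp_add[symmetric])
    finally show ?thesis .
  qed
  then show ?thesis using c1 by blast
qed

end

context detp begin

lemma part3:
  assumes "1 \<le> j" "j < i"
  shows "exp (\<eta> / (1 - \<alpha>) * (real j powr (1 - \<alpha>) - real i powr (1 - \<alpha>)))
      \<le> exp (- \<eta> * real i powr (-\<alpha>) * (real i - real j))"
proof -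
  have "(1-\<alpha>) * real i powr (1-\<alpha>-1) * (real i - real j) \<le> real i powr (1-\<alpha>) - real j powr (1-\<alpha>)"
    using assms a_lt a_gt by (intro mvt_powr(1)) auto
  then have h: "(1-\<alpha>) * (real i powr (-\<alpha>) * (real i - real j)) \<le> real i powr (1-\<alpha>) - real j powr (1-\<alpha>)"
    by simp
  have "\<eta> * real i powr (-\<alpha>) * (real i - real j) \<le> \<eta> / (1 - \<alpha>) * (real i powr (1 - \<alpha>) - real j powr (1 - \<alpha>))"
  proof -
    have "\<eta> / (1 - \<alpha>) * ((1-\<alpha>) * (real i powr (-\<alpha>) * (real i - real j)))
        \<le> \<eta> / (1 - \<alpha>) * (real i powr (1 - \<alpha>) - real j powr (1 - \<alpha>))"
      using h a_lt eta_pos by (intro mult_left_mono) auto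
    then show ?thesis using a_lt by simp
  qed
  then show ?thesis by (simp add: algebra_simps)
qed

lemma S_lower:
  assumes "1 \<le> j" "j \<le> i"
  shows "S i - S j \<ge> \<eta> / (1 - \<alpha>) * (real i powr (1 - \<alpha>) - real j powr (1 - \<alpha>)) - \<eta>"
proof -
  let ?a = "1 - \<alpha>"
  define f where "f r = real r powr ?a" for r
  have a01: "0 < ?a" "?a < 1" using a_lt a_gt by auto
  have tb: "f (Suc r) - f r \<le> ?a * real r powr (-\<alpha>)" if "r \<ge> 1" for r
  proof -
    have "real (Suc r) powr ?a - real r powr ?a \<le> ?a * real r powr (?a - 1) * (real (Suc r) - real r)"
      using that a01 by (intro mvt_powr(2)) auto
    then show ?thesis unfolding f_def by simp
  qed
  have "S i - S j = (\<Sum>r\<in>{Suc j..i}. s r)" using S_add[of j "i - j"] assms by simp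
  also have "\<dots> = (\<eta> / ?a) * (\<Sum>r\<in>{Suc j..i}. ?a * real r powr (-\<alpha>))"
    using a01 by (simp add: sum_distrib_left step_def)
  also have "\<dots> \<ge> (\<eta> / ?a) * (\<Sum>r\<in>{Suc j..i}. f (Suc r) - f r)"
    using eta_pos a01 assms by (intro mult_left_mono sum_mono tb) auto
  finally have 1: "S i - S j \<ge> (\<eta> / ?a) * (f (Suc i) - f (Suc j))"
    using sum_Suc_diff[of "Suc j" i f] assms by simp
  have 2: "f (Suc i) \<ge> f i" unfolding f_def using a01 by (intro powr_mono2) auto
  have 3: "f (Suc j) - f j \<le> ?a" 
  proof -
    have "f (Suc j) - f j \<le> ?a * real j powr (-\<alpha>)" using tb assms by simp
    also have "real j powr (-\<alpha>) \<le> 1"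
      using assms a_gt ge_one_powr_ge_zero[of "real j" \<alpha>] by (simp add: powr_minus inverse_le_1_iff)
    then have "?a * real j powr (-\<alpha>) \<le> ?a" using a01 by (simp add: mult_le_cancel_left1)
    finally show ?thesis .
  qed
  have "f (Suc i) - f (Suc j) \<ge> f i - f j - ?a" using 2 3 by linarith
  then have "(\<eta> / ?a) * (f (Suc i) - f (Suc j)) \<ge> (\<eta> / ?a) * (f i - f j - ?a)"
    using eta_pos a01 by (intro mult_left_mono) auto
  also have "(\<eta> / ?a) * (f i - f j - ?a) = \<eta> / ?a * (f i - f j) - \<eta>" using a01 by (simp add: field_simps)
  finally show ?thesis using 1 unfolding f_def by linarith
qed

lemma exp_S_bound:
  assumes "1 \<le> j" "j \<le> i"
  shows "exp (-(S i - S j)) \<le> exp \<eta> * exp (\<eta> / (1 - \<alpha>) * (real j powr (1 - \<alpha>) - real i powr (1 - \<alpha>)))"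
proof -
  have "-(S i - S j) \<le> \<eta> + \<eta> / (1 - \<alpha>) * (real j powr (1 - \<alpha>) - real i powr (1 - \<alpha>))"
    using S_lower[OF assms] by (simp add: algebra_simps)
  then show ?thesis by (simp add: exp_add[symmetric])
qed

end

context detp begin

definition coef :: "nat \<Rightarrow> nat \<Rightarrow> real" where
  "coef k m = (if 1 \<le> m \<and> m \<le> k then s m * Pr m k else 0)"

definition G :: "nat \<Rightarrow> nat \<Rightarrow> nat \<Rightarrow> real" where
  "G N k l = (\<Sum>m\<in>{1..N}. coef k m * coef l m)"

lemma G_sym: "G N k l = G N l k" unfolding G_def by (simp add: mult.commute)

lemma S_nonneg_diff: "m \<le> k \<Longrightarrow> S k - S m \<ge> 0" using S_mono by simp

context
  fixes B c :: real
  assumes B1: "B \<ge> 1" and hB: "\<And>k l. k \<le> l \<Longrightarrow> \<bar>Pr k l\<bar> \<le> B * exp (-(S l - S k))"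
    and c1: "c \<ge> 1" and hc: "\<And>l k. l \<le> k \<Longrightarrow> s l * exp (-(S k - S l)/2) \<le> c * s k"
begin

lemma hc_full: "l \<le> k \<Longrightarrow> s l * exp (-(S k - S l)) \<le> c * s k"
proof -
  assume lk: "l \<le> k"
  have "exp (-(S k - S l)) \<le> exp (-(S k - S l)/2)" using S_nonneg_diff[OF lk] by simp
  then have "s l * exp (-(S k - S l)) \<le> s l * exp (-(S k - S l)/2)"
    using s_nonneg by (intro mult_left_mono) auto
  also have "\<dots> \<le> c * s k" using hc[OF lk] .
  finally show ?thesis .
qed

lemma Q_bound: "(\<Sum>m\<in>{..k}. (s m)\<^sup>2 * exp (-2 * (S k - S m))) \<le> c * (1 + \<eta>) * s k"
proof -
  have "(\<Sum>m\<in>{..k}. (s m)\<^sup>2 * exp (-2 * (S k - S m)))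
      = (\<Sum>m\<in>{..k}. (s m * exp (-(S k - S m))) * (s m * exp (-(S k - S m))))"
    by (intro sum.cong refl) (simp add: power2_eq_square exp_add[symmetric] algebra_simps)
  also have "\<dots> \<le> (\<Sum>m\<in>{..k}. (c * s k) * (s m * exp (-(S k - S m))))"
    using hc_full s_nonneg by (intro sum_mono mult_right_mono) auto
  also have "\<dots> = (c * s k) * (\<Sum>m\<in>{..k}. s m * exp (-(S k - S m)))"
    by (simp add: sum_distrib_left)
  also have "\<dots> \<le> (c * s k) * (1 + \<eta>)"
    using back_sum c1 s_nonneg[of k] by (intro mult_left_mono) auto
  finally show ?thesis by (simp add: algebra_simps)
qed

lemma coef_bound: "\<bar>coef k m\<bar> \<le> (if m \<le> k then B * s m * exp (-(S k - S m)) else 0)"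
  unfolding coef_def using hB[of m k] s_nonneg[of m] B1
  by (auto simp: abs_mult intro: order.trans[OF mult_left_mono] simp: mult.assoc)

lemma G_bound_le:
  assumes kl: "k \<le> l"
  shows "\<bar>G N k l\<bar> \<le> B\<^sup>2 * c * (1 + \<eta>) * s k * exp (-(S l - S k))"
proof -
  define g where "g m = B\<^sup>2 * ((s m)\<^sup>2 * exp (-2 * (S k - S m))) * exp (-(S l - S k))" for m
  have g_nn: "g m \<ge> 0" for m unfolding g_def by simp
  have pw: "\<bar>coef k m * coef l m\<bar> \<le> (if m \<le> k then g m else 0)" for m
  proof (cases "m \<le> k")
    case True
    have "\<bar>coef k m * coef l m\<bar> = \<bar>coef k m\<bar> * \<bar>coef l m\<bar>" by (simp add: abs_mult)
    also have "\<dots> \<le> (B * s m * exp (-(S k - S m))) * (B * s m * exp (-(S l - S m)))"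
      using coef_bound[of k m] coef_bound[of l m] True kl
      by (intro mult_mono) (auto split: if_splits)
    also have "\<dots> = g m" unfolding g_def
      by (simp add: power2_eq_square exp_add[symmetric] algebra_simps)
    finally show ?thesis using True by simp
  next
    case False
    then have "coef k m = 0" unfolding coef_def by simp
    then show ?thesis using False by simp
  qed
  have "\<bar>G N k l\<bar> \<le> (\<Sum>m\<in>{1..N}. \<bar>coef k m * coef l m\<bar>)" unfolding G_def by (rule sum_abs)
  also have "\<dots> \<le> (\<Sum>m\<in>{1..N}. (if m \<le> k then g m else 0))" by (intro sum_mono pw)
  also have "\<dots> = (\<Sum>m\<in>{1..N} \<inter> {..k}. g m)"
    by (subst sum.inter_restrict) simp_all
  also have "\<dots> \<le> (\<Sum>m\<in>{..k}. g m)" by (intro sum_mono2) (auto simp: g_nn)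
  also have "\<dots> = B\<^sup>2 * exp (-(S l - S k)) * (\<Sum>m\<in>{..k}. (s m)\<^sup>2 * exp (-2 * (S k - S m)))"
    unfolding g_def by (simp add: sum_distrib_left algebra_simps)
  also have "\<dots> \<le> B\<^sup>2 * exp (-(S l - S k)) * (c * (1 + \<eta>) * s k)"
    by (intro mult_left_mono Q_bound) auto
  finally show ?thesis by (simp add: algebra_simps)
qed

definition "A0 = B\<^sup>2 * c * (1 + \<eta>)"

lemma A0_nn: "A0 \<ge> 0" unfolding A0_def using c1 eta_pos by simp

lemma key_sum:
  assumes F: "F \<subseteq> {..n}"
  shows "(\<Sum>k\<in>F. \<bar>G N k l\<bar>) \<le> A0 * ((1 + \<eta>) + 2 * c)"
proof -
  have fin: "finite F" using F finite_subset by blast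
  have p1: "(\<Sum>k\<in>F \<inter> {..l}. \<bar>G N k l\<bar>) \<le> A0 * (1 + \<eta>)"
  proof -
    have "(\<Sum>k\<in>F \<inter> {..l}. \<bar>G N k l\<bar>) \<le> (\<Sum>k\<in>F \<inter> {..l}. A0 * (s k * exp (-(S l - S k))))"
      using G_bound_le unfolding A0_def by (intro sum_mono) (auto simp: algebra_simps)
    also have "\<dots> \<le> (\<Sum>k\<in>{..l}. A0 * (s k * exp (-(S l - S k))))"
      using A0_nn s_nonneg by (intro sum_mono2) auto
    also have "\<dots> = A0 * (\<Sum>k\<in>{..l}. s k * exp (-(S l - S k)))" by (simp add: sum_distrib_left)
    also have "\<dots> \<le> A0 * (1 + \<eta>)" using A0_nn back_sum by (intro mult_left_mono) auto
    finally show ?thesis .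
  qed
  have p2: "(\<Sum>k\<in>F - {..l}. \<bar>G N k l\<bar>) \<le> A0 * (2 * c)"
  proof -
    have b: "\<bar>G N k l\<bar> \<le> A0 * c * (s k * exp (-(S k - S l)/2))" if "k \<in> F - {..l}" for k
    proof -
      have lk: "l \<le> k" using that by auto
      have "\<bar>G N k l\<bar> = \<bar>G N l k\<bar>" by (simp add: G_sym)
      also have "\<dots> \<le> A0 * (s l * exp (-(S k - S l)))"
        using G_bound_le[OF lk] unfolding A0_def by (simp add: algebra_simps)
      finally have g1: "\<bar>G N k l\<bar> \<le> A0 * (s l * exp (-(S k - S l)))" .
      have "s l * exp (-(S k - S l)) = (s l * exp (-(S k - S l)/2)) * exp (-(S k - S l)/2)"
        by (simp add: exp_add[symmetric])
      also have "\<dots> \<le> (c * s k) * exp (-(S k - S l)/2)"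
        using hc[OF lk] by (intro mult_right_mono) auto
      finally have g2: "s l * exp (-(S k - S l)) \<le> (c * s k) * exp (-(S k - S l)/2)" .
      have "A0 * (s l * exp (-(S k - S l))) \<le> A0 * ((c * s k) * exp (-(S k - S l)/2))"
        using A0_nn g2 by (intro mult_left_mono)
      then show ?thesis using g1 by (simp add: algebra_simps)
    qed
    have "(\<Sum>k\<in>F - {..l}. \<bar>G N k l\<bar>) \<le> (\<Sum>k\<in>F - {..l}. A0 * c * (s k * exp (-(S k - S l)/2)))"
      using b by (intro sum_mono) auto
    also have "\<dots> \<le> (\<Sum>k\<in>{l<..n}. A0 * c * (s k * exp (-(S k - S l)/2)))"
      using A0_nn c1 s_nonneg F by (intro sum_mono2) auto
    also have "\<dots> = A0 * c * (\<Sum>k\<in>{l<..n}. s k * exp (-(S k - S l)/2))" by (simp add: sum_distrib_left)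
    also have "\<dots> \<le> A0 * c * 2" using A0_nn c1 fwd_sum by (intro mult_left_mono) auto
    finally show ?thesis by simp
  qed
  have "(\<Sum>k\<in>F. \<bar>G N k l\<bar>) = (\<Sum>k\<in>F \<inter> {..l}. \<bar>G N k l\<bar>) + (\<Sum>k\<in>F - {..l}. \<bar>G N k l\<bar>)"
    using fin by (rule sum.Int_Diff)
  also have "\<dots> \<le> A0 * (1 + \<eta>) + A0 * (2 * c)" using p1 p2 by linarith
  finally show ?thesis by (simp add: algebra_simps)
qed

lemma key_sum2:
  assumes F: "F \<subseteq> {..j}" and ji: "j \<le> i"
  shows "(\<Sum>k\<in>F. \<bar>G N k i\<bar>) \<le> A0 * (1 + \<eta>) * exp (-(S i - S j))"
proof -
  have "(\<Sum>k\<in>F. \<bar>G N k i\<bar>) \<le> (\<Sum>k\<in>F. A0 * exp (-(S i - S j)) * (s k * exp (-(S j - S k))))"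
  proof (intro sum_mono)
    fix k assume "k \<in> F"
    then have kj: "k \<le> j" using F by auto
    have "\<bar>G N k i\<bar> \<le> A0 * (s k * exp (-(S i - S k)))"
      using G_bound_le[of k i] kj ji unfolding A0_def by (simp add: algebra_simps)
    also have "exp (-(S i - S k)) = exp (-(S i - S j)) * exp (-(S j - S k))"
      by (simp add: exp_add[symmetric])
    finally show "\<bar>G N k i\<bar> \<le> A0 * exp (-(S i - S j)) * (s k * exp (-(S j - S k)))"
      by (simp add: algebra_simps)
  qed
  also have "\<dots> \<le> (\<Sum>k\<in>{..j}. A0 * exp (-(S i - S j)) * (s k * exp (-(S j - S k))))"
    using A0_nn s_nonneg F by (intro sum_mono2) auto
  also have "\<dots> = A0 * exp (-(S i - S j)) * (\<Sum>k\<in>{..j}. s k * exp (-(S j - S k)))"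
    by (simp add: sum_distrib_left)
  also have "\<dots> \<le> A0 * exp (-(S i - S j)) * (1 + \<eta>)"
    using A0_nn back_sum by (intro mult_left_mono) auto
  finally show ?thesis by (simp add: algebra_simps)
qed

end
end

context detp begin

lemma Pr_Suc: "m \<le> k \<Longrightarrow> Pr m (Suc k) = Pr m k * (1 - s (Suc k))"
  unfolding Pr_def by (simp add: mult.commute)

lemma Pr_self: "Pr k k = 1" unfolding Pr_def by simp

lemma coef_Suc: "coef (Suc k) m = (1 - s (Suc k)) * coef k m + (if m = Suc k then s (Suc k) else 0)"
  unfolding coef_def using Pr_Suc[of m k] by (auto simp: Pr_self le_Suc_eq)

lemma coef_zero: "m > k \<Longrightarrow> coef k m = 0" unfolding coef_def by simp

lemma Xrep: "k \<le> N \<Longrightarrow> Xseq \<eta> \<alpha> x0 e k \<omega> = x0 * Pr 0 k + (\<Sum>m\<in>{1..N}. coef k m * e m \<omega>)"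
proof (induction k)
  case 0 then show ?case by (simp add: Pr_self coef_def)
next
  case (Suc k)
  let ?a = "1 - s (Suc k)"
  have IH: "Xseq \<eta> \<alpha> x0 e k \<omega> = x0 * Pr 0 k + (\<Sum>m\<in>{1..N}. coef k m * e m \<omega>)"
    using Suc by simp
  have d: "(\<Sum>m\<in>{1..N}. (if m = Suc k then s (Suc k) else 0) * e m \<omega>) = s (Suc k) * e (Suc k) \<omega>"
    using Suc.prems by (simp add: if_distrib[of "\<lambda>x. x * _"] cong: if_cong)
  have "(\<Sum>m\<in>{1..N}. coef (Suc k) m * e m \<omega>)
      = ?a * (\<Sum>m\<in>{1..N}. coef k m * e m \<omega>) + (\<Sum>m\<in>{1..N}. (if m = Suc k then s (Suc k) else 0) * e m \<omega>)"
    unfolding coef_Suc distrib_right sum.distrib by (simp add: sum_distrib_left mult.assoc)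
  note sumeq = this
  have "Xseq \<eta> \<alpha> x0 e (Suc k) \<omega> = ?a * Xseq \<eta> \<alpha> x0 e k \<omega> + s (Suc k) * e (Suc k) \<omega>" by simp
  also have "\<dots> = x0 * (Pr 0 k * ?a) + (?a * (\<Sum>m\<in>{1..N}. coef k m * e m \<omega>) + (\<Sum>m\<in>{1..N}. (if m = Suc k then s (Suc k) else 0) * e m \<omega>))"
    unfolding IH d by (simp add: algebra_simps)
  also have "\<dots> = x0 * Pr 0 (Suc k) + (\<Sum>m\<in>{1..N}. coef (Suc k) m * e m \<omega>)"
    unfolding sumeq Pr_Suc[of 0 k, OF le0] ..
  finally show ?case .
qed

lemma Brep:
  assumes "Bs \<subseteq> {..N}"
  shows "(\<Sum>k\<in>Bs. Xseq \<eta> \<alpha> x0 e k \<omega>) = (\<Sum>k\<in>Bs. x0 * Pr 0 k) + (\<Sum>m\<in>{1..N}. (\<Sum>k\<in>Bs. coef k m) * e m \<omega>)"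
proof -
  have "(\<Sum>k\<in>Bs. Xseq \<eta> \<alpha> x0 e k \<omega>) = (\<Sum>k\<in>Bs. x0 * Pr 0 k + (\<Sum>m\<in>{1..N}. coef k m * e m \<omega>))"
    using assms by (intro sum.cong refl Xrep) auto
  also have "\<dots> = (\<Sum>k\<in>Bs. x0 * Pr 0 k) + (\<Sum>m\<in>{1..N}. (\<Sum>k\<in>Bs. coef k m) * e m \<omega>)"
    by (simp add: sum.distrib sum_distrib_right sum.swap[of _ Bs])
  finally show ?thesis .
qed

lemma sum_G: "(\<Sum>m\<in>{1..N}. (\<Sum>k\<in>Bk. coef k m) * (\<Sum>l\<in>Bl. coef l m)) = (\<Sum>k\<in>Bk. \<Sum>l\<in>Bl. G N k l)"
proof -
  have "(\<Sum>k\<in>Bk. \<Sum>l\<in>Bl. G N k l) = (\<Sum>k\<in>Bk. \<Sum>m\<in>{1..N}. \<Sum>l\<in>Bl. coef k m * coef l m)"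
    unfolding G_def by (rule sum.cong[OF refl], rule sum.swap)
  also have "\<dots> = (\<Sum>m\<in>{1..N}. \<Sum>k\<in>Bk. \<Sum>l\<in>Bl. coef k m * coef l m)"
    by (rule sum.swap)
  also have "\<dots> = (\<Sum>m\<in>{1..N}. (\<Sum>k\<in>Bk. coef k m) * (\<Sum>l\<in>Bl. coef l m))"
    by (simp add: sum_product)
  finally show ?thesis by simp
qed

end

theorem lemmaC2:
  fixes M :: "'a measure" and e :: "nat \<Rightarrow> 'a \<Rightarrow> real"
    and \<eta> \<alpha> C x0 :: real
  assumes "prob_space M"
    and "\<eta> > 0" and "1/2 < \<alpha>" and "\<alpha> < 1" and "C > 0"
    and "\<And>i. e i \<in> borel_measurable M"
    and "prob_space.indep_vars M (\<lambda>_. borel) e {1..}"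
    and "\<And>i. i \<ge> 1 \<Longrightarrow> distr M borel (e i) = distr M borel (e 1)"
    and "integrable M (\<lambda>\<omega>. (e 1 \<omega>)\<^sup>2)"
    and "prob_space.expectation M (e 1) = 0"
    and "prob_space.expectation M (\<lambda>\<omega>. (e 1 \<omega>)\<^sup>2) > 0"
  shows "\<exists>K. \<forall>i j. 1 \<le> j \<and> j < i \<longrightarrow>
    prob_space.variance M (Wblock \<eta> \<alpha> C x0 e i) \<le> K * real_of_int (blen C \<alpha> i)
  \<and> prob_space.cov M (Xseq \<eta> \<alpha> x0 e i) (Wblock \<eta> \<alpha> C x0 e j)
      \<le> K * exp (\<eta> / (1 - \<alpha>) * (real j powr (1 - \<alpha>) - real i powr (1 - \<alpha>)))
  \<and> exp (\<eta> / (1 - \<alpha>) * (real j powr (1 - \<alpha>) - real i powr (1 - \<alpha>)))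
      \<le> exp (- \<eta> * real i powr (-\<alpha>) * (real i - real j))
  \<and> prob_space.cov M (Xseq \<eta> \<alpha> x0 e j) (Wblock \<eta> \<alpha> C x0 e i) \<le> K
  \<and> prob_space.cov M (Wblock \<eta> \<alpha> C x0 e i) (Wblock \<eta> \<alpha> C x0 e j) \<le> K * real_of_int (blen C \<alpha> j)"
proof -
  interpret P: prob_space M by (rule assms(1))
  interpret D: detp \<eta> \<alpha> by unfold_locales (use assms in auto)
  obtain B where B1: "B \<ge> 1" and hB: "\<And>k l. k \<le> l \<Longrightarrow> \<bar>D.Pr k l\<bar> \<le> B * exp (-(D.S l - D.S k))"
    using D.exists_B by blast
  obtain c where c1: "c \<ge> 1" and hc: "\<And>l k. l \<le> k \<Longrightarrow> step \<eta> \<alpha> l * exp (-(D.S k - D.S l)/2) \<le> c * step \<eta> \<alpha> k"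
    using D.exists_c by blast
  define \<sigma>2 where "\<sigma>2 = P.expectation (\<lambda>\<omega>. (e 1 \<omega>)\<^sup>2)"
  have s2: "\<sigma>2 > 0" unfolding \<sigma>2_def using assms(11) .
  note ep = P.e_props[OF assms(6) assms(7) assms(8) assms(9) assms(10)]
  define X where "X = Xseq \<eta> \<alpha> x0 e"
  have cov_blocks: "P.cov (\<lambda>\<omega>. \<Sum>k\<in>Bk. X k \<omega>) (\<lambda>\<omega>. \<Sum>l\<in>Bl. X l \<omega>) = \<sigma>2 * (\<Sum>k\<in>Bk. \<Sum>l\<in>Bl. D.G N k l)"
    if "Bk \<subseteq> {..N}" "Bl \<subseteq> {..N}" for Bk Bl N
  proof -
    have "P.cov (\<lambda>\<omega>. \<Sum>k\<in>Bk. X k \<omega>) (\<lambda>\<omega>. \<Sum>l\<in>Bl. X l \<omega>)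
        = \<sigma>2 * (\<Sum>m\<in>{1..N}. (\<Sum>k\<in>Bk. D.coef k m) * (\<Sum>l\<in>Bl. D.coef l m))"
    proof (rule P.lin_cov[where e = e])
      show "(\<lambda>\<omega>. \<Sum>k\<in>Bk. X k \<omega>) = (\<lambda>\<omega>. (\<Sum>k\<in>Bk. x0 * D.Pr 0 k) + (\<Sum>m\<in>{1..N}. (\<Sum>k\<in>Bk. D.coef k m) * e m \<omega>))"
        unfolding X_def using D.Brep[OF that(1)] by (intro ext) simp
      show "(\<lambda>\<omega>. \<Sum>l\<in>Bl. X l \<omega>) = (\<lambda>\<omega>. (\<Sum>k\<in>Bl. x0 * D.Pr 0 k) + (\<Sum>m\<in>{1..N}. (\<Sum>k\<in>Bl. D.coef k m) * e m \<omega>))"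
        unfolding X_def using D.Brep[OF that(2)] by (intro ext) simp
    qed (use ep in \<open>auto simp: \<sigma>2_def\<close>)
    also have "\<dots> = \<sigma>2 * (\<Sum>k\<in>Bk. \<Sum>l\<in>Bl. D.G N k l)" by (subst D.sum_G) (rule refl)
    finally show ?thesis .
  qed
  define KS where "KS = D.A0 B c * ((1 + \<eta>) + 2 * c)"
  define K2 where "K2 = D.A0 B c * (1 + \<eta>) * exp \<eta>"
  have A0nn: "D.A0 B c \<ge> 0" by (rule D.A0_nn[OF B1 hB c1 hc])
  have KSnn: "KS \<ge> 0" unfolding KS_def using A0nn c1 assms(2) by simp
  have K2nn: "K2 \<ge> 0" unfolding K2_def using A0nn assms(2) by simp
  define K where "K = \<sigma>2 * max KS K2"
  have block_bound: "\<bar>\<Sum>k\<in>Bk. \<Sum>l\<in>Bl. D.G N k l\<bar> \<le> real (card Bl) * KS"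
    if "Bk \<subseteq> {..n}" "finite Bl" for Bk Bl N n
  proof -
    have "\<bar>\<Sum>k\<in>Bk. \<Sum>l\<in>Bl. D.G N k l\<bar> \<le> (\<Sum>k\<in>Bk. \<Sum>l\<in>Bl. \<bar>D.G N k l\<bar>)"
      by (rule order.trans[OF sum_abs sum_mono[OF sum_abs]])
    also have "\<dots> = (\<Sum>l\<in>Bl. \<Sum>k\<in>Bk. \<bar>D.G N k l\<bar>)" by (rule sum.swap)
    also have "\<dots> \<le> (\<Sum>l\<in>Bl. KS)" unfolding KS_def
      by (intro sum_mono D.key_sum[OF B1 hB c1 hc that(1)])
    also have "\<dots> = real (card Bl) * KS" by simp
    finally show ?thesis .
  qed
  define Bi where "Bi i = {j. int j \<ge> bstart C \<alpha> i \<and> j < i}" for i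
  have Bi_sub: "Bi i \<subseteq> {..i}" for i unfolding Bi_def by auto
  have Bi_sub': "Bi i \<subseteq> {..<i}" for i unfolding Bi_def by auto
  have Bi_fin: "finite (Bi i)" for i using Bi_sub finite_subset by blast
  have W_eq: "Wblock \<eta> \<alpha> C x0 e i = (\<lambda>\<omega>. \<Sum>k\<in>Bi i. X k \<omega>)" for i
    unfolding Wblock_def Bi_def X_def by (intro ext) simp
  have X_eq: "Xseq \<eta> \<alpha> x0 e i = (\<lambda>\<omega>. \<Sum>k\<in>{i}. X k \<omega>)" for i
    unfolding X_def by simp
  have blen_nn: "real_of_int (blen C \<alpha> i) \<ge> 0" if "i \<ge> 1" for i
  proof -
    have "C * real i powr \<alpha> * ln (real i) \<ge> 0" using assms(5) that by simp
    then show ?thesis unfolding blen_def by simp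
  qed
  have card_le: "real (card (Bi i)) \<le> real_of_int (blen C \<alpha> i)" if "i \<ge> 1" for i
  proof -
    have "Bi i \<subseteq> {nat (bstart C \<alpha> i)..<i}" unfolding Bi_def by auto
    then have "card (Bi i) \<le> i - nat (bstart C \<alpha> i)" using card_mono[of "{nat (bstart C \<alpha> i)..<i}"] by fastforce
    moreover have "blen C \<alpha> i \<ge> 0" using blen_nn[OF that] by simp
    ultimately show ?thesis unfolding bstart_def by linarith
  qed
  show ?thesis
  proof (intro exI allI impI conjI)
    fix i j :: nat assume ij: "1 \<le> j \<and> j < i"
    then have i1: "i \<ge> 1" and j1: "j \<ge> 1" and jlei: "j \<le> i" by auto
    have "P.variance (Wblock \<eta> \<alpha> C x0 e i) = P.cov (Wblock \<eta> \<alpha> C x0 e i) (Wblock \<eta> \<alpha> C x0 e i)"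
      by (simp add: P.cov_def power2_eq_square)
    also have "\<dots> = \<sigma>2 * (\<Sum>k\<in>Bi i. \<Sum>l\<in>Bi i. D.G i k l)"
      unfolding W_eq by (rule cov_blocks[OF Bi_sub Bi_sub])
    also have "\<dots> \<le> \<sigma>2 * (real (card (Bi i)) * KS)"
      using s2 block_bound[OF Bi_sub Bi_fin] by (intro mult_left_mono) (auto simp: abs_le_iff)
    also have "\<dots> \<le> \<sigma>2 * (real_of_int (blen C \<alpha> i) * max KS K2)"
      using s2 card_le[OF i1] KSnn by (intro mult_left_mono mult_mono) auto
    finally show "P.variance (Wblock \<eta> \<alpha> C x0 e i) \<le> K * real_of_int (blen C \<alpha> i)"
      unfolding K_def by (simp add: algebra_simps)
  next
    fix i j :: nat assume ij: "1 \<le> j \<and> j < i"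
    then have i1: "i \<ge> 1" and j1: "j \<ge> 1" and jlei: "j \<le> i" by auto
    have "P.cov (Xseq \<eta> \<alpha> x0 e i) (Wblock \<eta> \<alpha> C x0 e j) = \<sigma>2 * (\<Sum>k\<in>{i}. \<Sum>l\<in>Bi j. D.G i k l)"
      unfolding W_eq X_eq by (rule cov_blocks) (use Bi_sub[of j] jlei in auto)
    also have "\<dots> = \<sigma>2 * (\<Sum>l\<in>Bi j. D.G i l i)" by (simp add: D.G_sym)
    also have "\<dots> \<le> \<sigma>2 * (\<Sum>l\<in>Bi j. \<bar>D.G i l i\<bar>)"
      using s2 by (intro mult_left_mono sum_mono) auto
    also have "\<dots> \<le> \<sigma>2 * (D.A0 B c * (1 + \<eta>) * exp (-(D.S i - D.S j)))"
      using s2 by (intro mult_left_mono D.key_sum2[OF B1 hB c1 hc Bi_sub jlei]) auto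
    also have "\<dots> \<le> \<sigma>2 * (D.A0 B c * (1 + \<eta>) * (exp \<eta> * exp (\<eta> / (1 - \<alpha>) * (real j powr (1 - \<alpha>) - real i powr (1 - \<alpha>)))))"
      using s2 A0nn assms(2) D.exp_S_bound[OF j1 jlei] by (intro mult_left_mono) auto
    also have "\<dots> = \<sigma>2 * K2 * exp (\<eta> / (1 - \<alpha>) * (real j powr (1 - \<alpha>) - real i powr (1 - \<alpha>)))"
      unfolding K2_def by (simp add: algebra_simps)
    also have "\<dots> \<le> K * exp (\<eta> / (1 - \<alpha>) * (real j powr (1 - \<alpha>) - real i powr (1 - \<alpha>)))"
      unfolding K_def using s2 by (intro mult_right_mono mult_left_mono) auto
    finally show "P.cov (Xseq \<eta> \<alpha> x0 e i) (Wblock \<eta> \<alpha> C x0 e j) \<le> K * exp (\<eta> / (1 - \<alpha>) * (real j powr (1 - \<alpha>) - real i powr (1 - \<alpha>)))" .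
  next
    fix i j :: nat assume ij: "1 \<le> j \<and> j < i"
    then show "exp (\<eta> / (1 - \<alpha>) * (real j powr (1 - \<alpha>) - real i powr (1 - \<alpha>)))
      \<le> exp (- \<eta> * real i powr (-\<alpha>) * (real i - real j))"
      using D.part3 by auto
  next
    fix i j :: nat assume ij: "1 \<le> j \<and> j < i"
    then have i1: "i \<ge> 1" and j1: "j \<ge> 1" and jlei: "j \<le> i" by auto
    have "P.cov (Xseq \<eta> \<alpha> x0 e j) (Wblock \<eta> \<alpha> C x0 e i) = \<sigma>2 * (\<Sum>k\<in>{j}. \<Sum>l\<in>Bi i. D.G i k l)"
      unfolding W_eq X_eq by (rule cov_blocks) (use Bi_sub[of i] jlei in auto)
    also have "\<dots> = \<sigma>2 * (\<Sum>l\<in>Bi i. D.G i l j)" by (simp add: D.G_sym)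
    also have "\<dots> \<le> \<sigma>2 * (\<Sum>l\<in>Bi i. \<bar>D.G i l j\<bar>)"
      using s2 by (intro mult_left_mono sum_mono) auto
    also have "\<dots> \<le> \<sigma>2 * KS"
      unfolding KS_def using s2 by (intro mult_left_mono D.key_sum[OF B1 hB c1 hc Bi_sub]) auto
    also have "\<dots> \<le> K" unfolding K_def using s2 by (intro mult_left_mono) auto
    finally show "P.cov (Xseq \<eta> \<alpha> x0 e j) (Wblock \<eta> \<alpha> C x0 e i) \<le> K" .
  next
    fix i j :: nat assume ij: "1 \<le> j \<and> j < i"
    then have i1: "i \<ge> 1" and j1: "j \<ge> 1" and jlei: "j \<le> i" by auto
    have "P.cov (Wblock \<eta> \<alpha> C x0 e i) (Wblock \<eta> \<alpha> C x0 e j) = \<sigma>2 * (\<Sum>k\<in>Bi i. \<Sum>l\<in>Bi j. D.G i k l)"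
      unfolding W_eq by (rule cov_blocks) (use Bi_sub[of i] Bi_sub[of j] jlei in auto)
    also have "\<dots> \<le> \<sigma>2 * (real (card (Bi j)) * KS)"
      using s2 block_bound[OF Bi_sub Bi_fin] by (intro mult_left_mono) (auto simp: abs_le_iff)
    also have "\<dots> \<le> \<sigma>2 * (real_of_int (blen C \<alpha> j) * max KS K2)"
      using s2 card_le[OF j1] KSnn by (intro mult_left_mono mult_mono) auto
    finally show "P.cov (Wblock \<eta> \<alpha> C x0 e i) (Wblock \<eta> \<alpha> C x0 e j) \<le> K * real_of_int (blen C \<alpha> j)"
      unfolding K_def by (simp add: algebra_simps)
  qed
qed

end
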